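(* In any instance of the binary voting game with $N$ agents, every regular strategy profile $\Sigma_N$ is an $\varepsilon$-strong Bayes Nash Equilibrium with $\varepsilon=2B(B+1)\,(1-A(\Sigma_N))$, where $B$ is the upper bound of the utility functions.
   Context: Binary voting game. $N$ agents each vote for $\mathbf{A}$ or $\mathbf{R}$. Unobserved world state $W\in\{L,H\}$ with common prior $P_L,P_H>0$. Conditional on $W$, each agent independently receives a signal $S_n\in\{l,h\}$ with $P_{sw}=\Pr[S_n=s\mid W=w]$, $P_{hH}>P_{hL}$, $P_{lH}<P_{lL}$. With threshold $\mu\in(0,1)$, $\mathbf{A}$ wins iff at least $\mu N$ agents vote $\mathbf{A}$, else $\mathbf{R}$. Agent $n$ has utility $v_n:\{L,H\}\times\{\mathbf{A},\mathbf{R}\}\to\{0,\dots,B\}$ ($B$ a positive integer) with $v_n(H,\mathbf{A})>v_n(L,\mathbf{A})$, $v_n(H,\mathbf{R})<v_n(L,\mathbf{R})$. Every agent is friendly ($v_n(H,\mathbf{A})>v_n(L,\mathbf{A})>v_n(L,\mathbf{R})>v_n(H,\mathbf{R})$), unfriendly ($v_n(L,\mathbf{R})>v_n(H,\mathbf{R})>v_n(H,\mathbf{A})>v_n(L,\mathbf{A})$), or contingent ($v_n(H,\mathbf{A})>v_n(H,\mathbf{R})$, $v_n(L,\mathbf{R})>v_n(L,\mathbf{A})$). With fixed constants $\alpha_F,\alpha_U,\alpha_C\ge0$ summing to $1$: $\lfloor\alpha_F N\rfloor$ friendly, $\lfloor\alpha_U N\rfloor$ unfriendly, the rest contingent. Standing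 assumption: $\alpha_F<\mu$ and $\alpha_U<1-\mu$, so the informed majority decision is $\mathbf{A}$ in $H$ and $\mathbf{R}$ in $L$. Strategy $\sigma=(\beta_l,\beta_h)$, $\beta_s$ = probability of voting $\mathbf{A}$ on signal $s$. Regular profile: friendly agents always vote $\mathbf{A}$, unfriendly agents always vote $\mathbf{R}$. $\lambda^{\mathbf{X}}_w(\Sigma)$: ex-ante probability that $\mathbf{X}$ wins in state $w$. Fidelity $A(\Sigma)=P_L\lambda^{\mathbf{R}}_L(\Sigma)+P_H\lambda^{\mathbf{A}}_H(\Sigma)$. Expected utility $u_n(\Sigma)=\sum_w P_w(\lambda^{\mathbf{A}}_w(\Sigma)v_n(w,\mathbf{A})+\lambda^{\mathbf{R}}_w(\Sigma)v_n(w,\mathbf{R}))$. $\Sigma$ is an $\varepsilon$-strong Bayes Nash Equilibrium if there is no set $D$ of agents and profile $\Sigma'$ with $\sigma'_n=\sigma_n$ for $n\notin D$, $u_n(\Sigma')\ge u_n(\Sigma)$ for all $n\in D$ and $u_n(\Sigma')>u_n(\Sigma)+\varepsilon$ for some $n\in D$. *)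

theory Defs
  imports Main "HOL-Library.Multiset" Complex_Main
begin

datatype world = L | H
datatype signal = Sl | Sh
datatype outcome = Acc | Rej

text \<open>A strategy is a pair (beta_l, beta_h): probability of voting Acc on signal l / h.
  A profile is a function from agent indices (0..<N) to strategies.
  Ps s w = Pr[S_n = s | W = w].\<close>

definition valid_profile :: "nat \<Rightarrow> (nat \<Rightarrow> real \<times> real) \<Rightarrow> bool" where
  "valid_profile N \<Sigma> \<longleftrightarrow> (\<forall>n<N. 0 \<le> fst (\<Sigma> n) \<and> fst (\<Sigma> n) \<le> 1 \<and> 0 \<le> snd (\<Sigma> n) \<and> snd (\<Sigma> n) \<le> 1)"

definition pvote :: "(signal \<Rightarrow> world \<Rightarrow> real) \<Rightarrow> (nat \<Rightarrow> real \<times> real) \<Rightarrow> world \<Rightarrow> nat \<Rightarrow> real" where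
  "pvote Ps \<Sigma> w n = Ps Sl w * fst (\<Sigma> n) + Ps Sh w * snd (\<Sigma> n)"

definition wins :: "nat \<Rightarrow> real \<Rightarrow> outcome \<Rightarrow> nat set \<Rightarrow> bool" where
  "wins N \<mu> X S \<longleftrightarrow> (if X = Acc then \<mu> * real N \<le> real (card S) else real (card S) < \<mu> * real N)"

definition lam :: "nat \<Rightarrow> real \<Rightarrow> (signal \<Rightarrow> world \<Rightarrow> real) \<Rightarrow> (nat \<Rightarrow> real \<times> real) \<Rightarrow> world \<Rightarrow> outcome \<Rightarrow> real" where
  "lam N \<mu> Ps \<Sigma> w X =
     (\<Sum>S\<in>{S. S \<subseteq> {..<N} \<and> wins N \<mu> X S}.
        (\<Prod>n\<in>S. pvote Ps \<Sigma> w n) * (\<Prod>n\<in>{..<N} - S. 1 - pvote Ps \<Sigma> w n))"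

definition fidelity :: "nat \<Rightarrow> real \<Rightarrow> (world \<Rightarrow> real) \<Rightarrow> (signal \<Rightarrow> world \<Rightarrow> real) \<Rightarrow> (nat \<Rightarrow> real \<times> real) \<Rightarrow> real" where
  "fidelity N \<mu> Pw Ps \<Sigma> = Pw L * lam N \<mu> Ps \<Sigma> L Rej + Pw H * lam N \<mu> Ps \<Sigma> H Acc"

definition utility :: "nat \<Rightarrow> real \<Rightarrow> (world \<Rightarrow> real) \<Rightarrow> (signal \<Rightarrow> world \<Rightarrow> real) \<Rightarrow> (nat \<Rightarrow> world \<Rightarrow> outcome \<Rightarrow> nat) \<Rightarrow> nat \<Rightarrow> (nat \<Rightarrow> real \<times> real) \<Rightarrow> real" where
  "utility N \<mu> Pw Ps v n \<Sigma> =
     (\<Sum>w\<in>{L, H}. Pw w * (lam N \<mu> Ps \<Sigma> w Acc * real (v n w Acc) + lam N \<mu> Ps \<Sigma> w Rej * real (v n w Rej)))"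

definition eps_strong_BNE :: "nat \<Rightarrow> real \<Rightarrow> (world \<Rightarrow> real) \<Rightarrow> (signal \<Rightarrow> world \<Rightarrow> real) \<Rightarrow> (nat \<Rightarrow> world \<Rightarrow> outcome \<Rightarrow> nat) \<Rightarrow> real \<Rightarrow> (nat \<Rightarrow> real \<times> real) \<Rightarrow> bool" where
  "eps_strong_BNE N \<mu> Pw Ps v \<epsilon> \<Sigma> \<longleftrightarrow>
     \<not> (\<exists>D \<Sigma>'. D \<subseteq> {..<N} \<and> valid_profile N \<Sigma>' \<and> (\<forall>n<N. n \<notin> D \<longrightarrow> \<Sigma>' n = \<Sigma> n)
          \<and> (\<forall>n\<in>D. utility N \<mu> Pw Ps v n \<Sigma>' \<ge> utility N \<mu> Pw Ps v n \<Sigma>)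
          \<and> (\<exists>n\<in>D. utility N \<mu> Pw Ps v n \<Sigma>' > utility N \<mu> Pw Ps v n \<Sigma> + \<epsilon>))"

definition friendly :: "(world \<Rightarrow> outcome \<Rightarrow> nat) \<Rightarrow> bool" where
  "friendly u \<longleftrightarrow> u H Acc > u L Acc \<and> u L Acc > u L Rej \<and> u L Rej > u H Rej"

definition unfriendly :: "(world \<Rightarrow> outcome \<Rightarrow> nat) \<Rightarrow> bool" where
  "unfriendly u \<longleftrightarrow> u L Rej > u H Rej \<and> u H Rej > u H Acc \<and> u H Acc > u L Acc"

definition contingent :: "(world \<Rightarrow> outcome \<Rightarrow> nat) \<Rightarrow> bool" where
  "contingent u \<longleftrightarrow> u H Acc > u H Rej \<and> u L Rej > u L Acc"

definition regular :: "nat \<Rightarrow> (nat \<Rightarrow> world \<Rightarrow> outcome \<Rightarrow> nat) \<Rightarrow> (nat \<Rightarrow> real \<times> real) \<Rightarrow> bool" where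
  "regular N v \<Sigma> \<longleftrightarrow> (\<forall>n<N. (friendly (v n) \<longrightarrow> \<Sigma> n = (1, 1)) \<and> (unfriendly (v n) \<longrightarrow> \<Sigma> n = (0, 0)))"

end

theory Submission
  imports Defs
begin


definition Q :: "nat set \<Rightarrow> (nat \<Rightarrow> real) \<Rightarrow> (nat set \<Rightarrow> bool) \<Rightarrow> real" where
  "Q I p P = (\<Sum>S\<in>Pow I. (if P S then (\<Prod>n\<in>S. p n) * (\<Prod>n\<in>I - S. 1 - p n) else 0))"

lemma Q_insert:
  assumes fin: "finite I" and i: "i \<notin> I"
  shows "Q (insert i I) p P = p i * Q I p (\<lambda>S. P (insert i S)) + (1 - p i) * Q I p P"
proof -
  define f where "f = (\<lambda>S. if P S then (\<Prod>n\<in>S. p n) * (\<Prod>n\<in>insert i I - S. 1 - p n) else (0::real))"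
  have inj: "inj_on (insert i) (Pow I)" using i unfolding inj_on_def
    by (metis PowD in_mono insert_ident)
  have disj: "Pow I \<inter> insert i ` Pow I = {}" using i by auto
  have "Q (insert i I) p P = sum f (Pow I \<union> insert i ` Pow I)"
    unfolding Q_def f_def Pow_insert ..
  also have "\<dots> = sum f (Pow I) + sum f (insert i ` Pow I)"
    by (rule sum.union_disjoint) (use fin disj in auto)
  also have "sum f (insert i ` Pow I) = sum (f \<circ> insert i) (Pow I)"
    by (rule sum.reindex[OF inj])
  also have "sum (f \<circ> insert i) (Pow I) = p i * Q I p (\<lambda>S. P (insert i S))"
    unfolding Q_def sum_distrib_left
  proof (rule sum.cong[OF refl])
    fix S assume S: "S \<in> Pow I"
    then have fS: "finite S" "i \<notin> S" using fin i finite_subset by auto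
    have e: "insert i I - insert i S = I - S" using i by auto
    show "(f \<circ> insert i) S = p i * (if P (insert i S) then (\<Prod>n\<in>S. p n) * (\<Prod>n\<in>I - S. 1 - p n) else 0)"
      using fS by (simp add: f_def e)
  qed
  also have "sum f (Pow I) = (1 - p i) * Q I p P"
    unfolding Q_def sum_distrib_left
  proof (rule sum.cong[OF refl])
    fix S assume S: "S \<in> Pow I"
    have e: "insert i I - S = insert i (I - S)" using i S by auto
    have "i \<notin> I - S" using i by auto
    then show "f S = (1 - p i) * (if P S then (\<Prod>n\<in>S. p n) * (\<Prod>n\<in>I - S. 1 - p n) else 0)"
      using fin by (simp add: f_def e)
  qed
  finally show ?thesis by simp
qed

lemma Q_nonneg:
  assumes "\<forall>n\<in>I. 0 \<le> p n \<and> p n \<le> 1"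
  shows "0 \<le> Q I p P"
  unfolding Q_def
proof (rule sum_nonneg)
  fix S assume "S \<in> Pow I"
  then have "\<forall>n\<in>S. 0 \<le> p n" "\<forall>n\<in>I - S. 0 \<le> 1 - p n" using assms by auto
  then show "0 \<le> (if P S then (\<Prod>n\<in>S. p n) * (\<Prod>n\<in>I - S. 1 - p n) else 0)"
    by (auto intro!: mult_nonneg_nonneg prod_nonneg)
qed

lemma Q_mono_pred:
  assumes "\<forall>n\<in>I. 0 \<le> p n \<and> p n \<le> 1" and "\<And>S. S \<subseteq> I \<Longrightarrow> P S \<Longrightarrow> P' S"
  shows "Q I p P \<le> Q I p P'"
  unfolding Q_def
proof (rule sum_mono)
  fix S assume S: "S \<in> Pow I"
  then have "\<forall>n\<in>S. 0 \<le> p n" "\<forall>n\<in>I - S. 0 \<le> 1 - p n" using assms by auto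
  then show "(if P S then (\<Prod>n\<in>S. p n) * (\<Prod>n\<in>I - S. 1 - p n) else 0)
     \<le> (if P' S then (\<Prod>n\<in>S. p n) * (\<Prod>n\<in>I - S. 1 - p n) else 0)"
    using assms(2)[of S] S by (auto intro!: mult_nonneg_nonneg prod_nonneg)
qed

lemma Q_mono:
  assumes "finite I"
  shows "\<forall>n\<in>I. 0 \<le> p n \<and> p n \<le> q n \<and> q n \<le> 1 \<Longrightarrow> (\<And>S j. P S \<Longrightarrow> P (insert j S)) \<Longrightarrow> Q I p P \<le> Q I q P"
  using assms
proof (induction I arbitrary: P rule: finite_induct)
  case empty
  show ?case unfolding Q_def Pow_empty by simp
next
  case (insert i I)
  let ?P1 = "\<lambda>S. P (insert i S)"
  have up1: "\<And>S j. ?P1 S \<Longrightarrow> ?P1 (insert j S)"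
    using insert.prems(2) by (metis insert_commute)
  have pI: "\<forall>n\<in>I. 0 \<le> p n \<and> p n \<le> q n \<and> q n \<le> 1" using insert.prems(1) by auto
  have A: "Q I p ?P1 \<le> Q I q ?P1" using insert.IH[of ?P1, OF pI up1] insert.hyps by simp
  have C: "Q I p P \<le> Q I q P" using insert.IH[of P, OF pI insert.prems(2)] insert.hyps by simp
  have qI: "\<forall>n\<in>I. 0 \<le> q n \<and> q n \<le> 1" using pI by auto
  have CA: "Q I q P \<le> Q I q ?P1"
    by (rule Q_mono_pred[OF qI]) (use insert.prems(2) in auto)
  have pi: "0 \<le> p i" "p i \<le> q i" "q i \<le> 1" using insert.prems(1) by auto
  have "p i * Q I p ?P1 + (1 - p i) * Q I p P \<le> p i * Q I q ?P1 + (1 - p i) * Q I q P"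
    using A C pi by (intro add_mono mult_left_mono) auto
  also have "\<dots> = Q I q P + p i * (Q I q ?P1 - Q I q P)" by (simp add: algebra_simps)
  also have "\<dots> \<le> Q I q P + q i * (Q I q ?P1 - Q I q P)"
    using CA pi by (intro add_left_mono mult_right_mono) auto
  also have "\<dots> = q i * Q I q ?P1 + (1 - q i) * Q I q P" by (simp add: algebra_simps)
  finally show ?case using Q_insert[OF insert.hyps] by simp
qed

lemma Q_compl:
  assumes "finite I"
  shows "Q I p P + Q I p (\<lambda>S. \<not> P S) = 1"
proof -
  have "Q I p P + Q I p (\<lambda>S. \<not> P S) = (\<Sum>S\<in>Pow I. (\<Prod>n\<in>S. p n) * (\<Prod>n\<in>I - S. 1 - p n))"
    unfolding Q_def sum.distrib[symmetric] by (rule sum.cong) auto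
  also have "\<dots> = (\<Prod>n\<in>I. p n + (1 - p n))" by (rule prod_add[OF assms, symmetric])
  finally show ?thesis by simp
qed

lemma lam_Q: "lam N \<mu> Ps \<Sigma> w X = Q {..<N} (pvote Ps \<Sigma> w) (wins N \<mu> X)"
proof -
  have e: "{S. S \<subseteq> {..<N} \<and> wins N \<mu> X S} = {S\<in>Pow {..<N}. wins N \<mu> X S}" by auto
  show ?thesis unfolding lam_def Q_def e by (rule sum.inter_filter) simp
qed



lemma absmul_le:
  fixes x d b c :: real
  assumes "\<bar>x\<bar> \<le> b" "\<bar>d\<bar> \<le> c"
  shows "x * d \<le> b * c"
proof -
  have "x * d \<le> \<bar>x * d\<bar>" by (rule abs_ge_self)
  also have "\<dots> = \<bar>x\<bar> * \<bar>d\<bar>" by (rule abs_mult)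
  also have "\<dots> \<le> b * c" using assms by (intro mult_mono) auto
  finally show ?thesis .
qed

lemma cont_bound:
  fixes x y \<delta> B cL cH dL dH :: real
  assumes d0: "0 \<le> \<delta>" and xl: "-\<delta> \<le> x" and yu: "y \<le> \<delta>" and c: "cL \<le> -1" "-B \<le> cL" "1 \<le> cH" "cH \<le> B"
    and G: "0 \<le> x*cL + y*cH" and d: "\<bar>dL\<bar> \<le> B" "\<bar>dH\<bar> \<le> B"
  shows "x*dL + y*dH \<le> 2*B*(B+1)*\<delta>"
proof -
  have B1: "1 \<le> B" using c by linarith
  have xb: "\<bar>x\<bar> \<le> B*\<delta>"
  proof (cases "x \<ge> 0")
    case True
    have "x * 1 \<le> x * (-cL)" by (rule mult_left_mono) (use True c in auto)
    then have "x \<le> x * (-cL)" by simp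
    also have "\<dots> \<le> y * cH" using G by simp
    finally have xy: "x \<le> y * cH" .
    have "0 \<le> y * cH" using xy True by linarith
    then have "0 \<le> y" using c by (simp add: zero_le_mult_iff)
    have "y * cH \<le> \<delta> * B" using \<open>0 \<le> y\<close> yu c d0 by (intro mult_mono) auto
    then show ?thesis using xy True by (simp add: mult.commute)
  next
    case False
    have "1 * \<delta> \<le> B * \<delta>" by (rule mult_right_mono) (use B1 d0 in auto)
    then show ?thesis using False xl by linarith
  qed
  have yb: "\<bar>y\<bar> \<le> B*\<delta>"
  proof (cases "y \<le> 0")
    case True
    have "(-y) * 1 \<le> (-y) * cH" by (rule mult_left_mono) (use True c in auto)
    then have "-y \<le> (-y) * cH" by simp
    also have "\<dots> \<le> x * cL" using G by simp
    finally have xy: "-y \<le> x * cL" .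
    have "0 \<le> x * cL" using xy True by linarith
    then have "x \<le> 0" using c by (simp add: zero_le_mult_iff)
    have "x * cL = (-x) * (-cL)" by simp
    also have "\<dots> \<le> \<delta> * B" using \<open>x \<le> 0\<close> xl c d0 by (intro mult_mono) auto
    finally show ?thesis using xy True by (simp add: mult.commute)
  next
    case False
    have "1 * \<delta> \<le> B * \<delta>" by (rule mult_right_mono) (use B1 d0 in auto)
    then show ?thesis using False yu by linarith
  qed
  have "x*dL \<le> (B*\<delta>) * B" by (rule absmul_le[OF xb d(1)])
  moreover have "y*dH \<le> (B*\<delta>) * B" by (rule absmul_le[OF yb d(2)])
  moreover have "2*((B*\<delta>) * B) \<le> 2*B*(B+1)*\<delta>"
  proof -
    have "B*\<delta>*B \<le> B*\<delta>*(B+1)" using B1 d0 by (intro mult_left_mono) auto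
    then show ?thesis by (simp add: algebra_simps)
  qed
  ultimately show ?thesis by linarith
qed

lemma mixed_bound:
  fixes x y \<delta> B fL fH uL uH dL dH :: real
  assumes d0: "0 \<le> \<delta>" and xl: "-\<delta> \<le> x" and yu: "y \<le> \<delta>"
    and f: "0 < fL" "fL < fH" and u: "uL < uH" "uH < 0"
    and Gf: "0 \<le> x*fL + y*fH" and Gu: "0 \<le> x*uL + y*uH"
    and d: "\<bar>dL\<bar> \<le> B" "\<bar>dH\<bar> \<le> B" and B1: "1 \<le> B"
  shows "x*dL + y*dH \<le> 2*B*(B+1)*\<delta>"
proof -
  have x0: "x \<le> 0"
  proof (rule ccontr)
    assume "\<not> x \<le> 0"
    then have xp: "x > 0" by simp
    have "x * uL < 0" using xp u by (simp add: mult_pos_neg)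
    then have "y * uH > 0" using Gu by linarith
    then have yn: "y < 0" using u by (simp add: zero_less_mult_iff)
    define a where "a = x"
    define b where "b = -y"
    have a0: "a > 0" and b0: "b > 0" using xp yn by (auto simp: a_def b_def)
    have e1: "a * fL \<ge> b * fH" using Gf by (simp add: a_def b_def)
    have e2: "b * (-uH) \<ge> a * (-uL)" using Gu by (simp add: a_def b_def)
    have "a * fL * (-uH) \<ge> b * fH * (-uH)" using e1 u by (intro mult_right_mono) auto
    moreover have "b * fH * (-uH) = fH * (b * (-uH))" by simp
    moreover have "fH * (b * (-uH)) \<ge> fH * (a * (-uL))" using e2 f by (intro mult_left_mono) auto
    ultimately have "a * (fL * (-uH)) \<ge> a * (fH * (-uL))" by (simp add: mult_ac)
    then have "fL * (-uH) \<ge> fH * (-uL)" using a0 by simp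
    moreover have "fL * (-uH) < fH * (-uL)"
    proof -
      have "fL * (-uH) < fH * (-uH)" using f u by simp
      also have "\<dots> < fH * (-uL)" using f u by simp
      finally show ?thesis .
    qed
    ultimately show False by simp
  qed
  have y0: "y \<ge> 0"
  proof (rule ccontr)
    assume "\<not> y \<ge> 0"
    then have "y * fH < 0" using f by (simp add: mult_neg_pos)
    then have "x * fL > 0" using Gf by linarith
    then have "x > 0" using f by (simp add: zero_less_mult_iff)
    then show False using x0 by simp
  qed
  have xb: "\<bar>x\<bar> \<le> \<delta>" using x0 xl by simp
  have yb: "\<bar>y\<bar> \<le> \<delta>" using y0 yu by simp
  have "x*dL \<le> \<delta> * B" by (rule absmul_le[OF xb d(1)])
  moreover have "y*dH \<le> \<delta> * B" by (rule absmul_le[OF yb d(2)])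
  moreover have "2*(\<delta> * B) \<le> 2*B*(B+1)*\<delta>"
  proof -
    have "\<delta>*B*1 \<le> \<delta>*B*(B+1)" using B1 d0 by (intro mult_left_mono) auto
    then show ?thesis by (simp add: algebra_simps)
  qed
  ultimately show ?thesis by linarith
qed



lemma pvote_bounds:
  assumes "valid_profile N \<Sigma>" "n < N" "\<forall>s w. 0 \<le> Ps s w" "\<forall>w. Ps Sl w + Ps Sh w = 1"
  shows "0 \<le> pvote Ps \<Sigma> w n \<and> pvote Ps \<Sigma> w n \<le> 1"
proof -
  obtain b1 b2 where b: "\<Sigma> n = (b1, b2)" by (cases "\<Sigma> n")
  have bb: "0 \<le> b1" "b1 \<le> 1" "0 \<le> b2" "b2 \<le> 1" using assms(1,2) b unfolding valid_profile_def by force+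
  have p: "0 \<le> Ps Sl w" "0 \<le> Ps Sh w" using assms(3) by auto
  have "Ps Sl w * b1 \<le> Ps Sl w" using p bb by (simp add: mult_left_le)
  moreover have "Ps Sh w * b2 \<le> Ps Sh w" using p bb by (simp add: mult_left_le)
  moreover have "0 \<le> Ps Sl w * b1" "0 \<le> Ps Sh w * b2" using p bb by auto
  moreover have "Ps Sl w + Ps Sh w = 1" using assms(4) by blast
  ultimately show ?thesis by (simp add: pvote_def b)
qed

lemma wins_Rej: "wins N \<mu> Rej = (\<lambda>S. \<not> wins N \<mu> Acc S)"
  by (auto simp: wins_def fun_eq_iff)

lemma lam_facts:
  assumes "valid_profile N \<Sigma>" "\<forall>s w. 0 \<le> Ps s w" "\<forall>w. Ps Sl w + Ps Sh w = 1"
  shows "0 \<le> lam N \<mu> Ps \<Sigma> w Acc" "lam N \<mu> Ps \<Sigma> w Acc \<le> 1"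
    "lam N \<mu> Ps \<Sigma> w Rej = 1 - lam N \<mu> Ps \<Sigma> w Acc"
proof -
  have pb: "\<forall>n\<in>{..<N}. 0 \<le> pvote Ps \<Sigma> w n \<and> pvote Ps \<Sigma> w n \<le> 1"
    using pvote_bounds[OF assms(1) _ assms(2,3)] by auto
  have c: "lam N \<mu> Ps \<Sigma> w Acc + lam N \<mu> Ps \<Sigma> w Rej = 1"
    unfolding lam_Q wins_Rej by (rule Q_compl) simp
  have "0 \<le> lam N \<mu> Ps \<Sigma> w Rej" "0 \<le> lam N \<mu> Ps \<Sigma> w Acc"
    unfolding lam_Q by (rule Q_nonneg[OF pb])+
  then show "0 \<le> lam N \<mu> Ps \<Sigma> w Acc" "lam N \<mu> Ps \<Sigma> w Acc \<le> 1"
    "lam N \<mu> Ps \<Sigma> w Rej = 1 - lam N \<mu> Ps \<Sigma> w Acc" using c by linarith+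
qed

lemma utility_eq:
  assumes "valid_profile N \<Sigma>" "\<forall>s w. 0 \<le> Ps s w" "\<forall>w. Ps Sl w + Ps Sh w = 1"
  shows "utility N \<mu> Pw Ps v n \<Sigma> =
     Pw L * (lam N \<mu> Ps \<Sigma> L Acc * real (v n L Acc) + (1 - lam N \<mu> Ps \<Sigma> L Acc) * real (v n L Rej))
   + Pw H * (lam N \<mu> Ps \<Sigma> H Acc * real (v n H Acc) + (1 - lam N \<mu> Ps \<Sigma> H Acc) * real (v n H Rej))"
  unfolding utility_def using lam_facts(3)[OF assms] by simp

lemma wins_up: assumes "wins N \<mu> Acc S" shows "wins N \<mu> Acc (insert j S)"
proof -
  have "real (card S) \<le> real (card (insert j S))" using card_insert_le[of S j] by simp
  then show ?thesis using assms unfolding wins_def by simp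
qed

lemma nat_lt_real: "(a::nat) < b \<Longrightarrow> real a + 1 \<le> real b"
  by linarith

theorem lemma1:
  fixes N B :: nat and \<mu> \<alpha>F \<alpha>U \<alpha>C :: real
    and Pw :: "world \<Rightarrow> real" and Ps :: "signal \<Rightarrow> world \<Rightarrow> real"
    and v :: "nat \<Rightarrow> world \<Rightarrow> outcome \<Rightarrow> nat" and \<Sigma> :: "nat \<Rightarrow> real \<times> real"
  assumes prior: "Pw L > 0" "Pw H > 0" "Pw L + Pw H = 1"
    and sig: "\<And>s w. 0 \<le> Ps s w" "\<And>w. Ps Sl w + Ps Sh w = 1"
    and sig_inf: "Ps Sh H > Ps Sh L" "Ps Sl H < Ps Sl L"
    and mu: "0 < \<mu>" "\<mu> < 1"
    and B: "B > 0"
    and vbound: "\<And>n w X. n < N \<Longrightarrow> v n w X \<le> B"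
    and vmono: "\<And>n. n < N \<Longrightarrow> v n H Acc > v n L Acc \<and> v n H Rej < v n L Rej"
    and types: "\<And>n. n < N \<Longrightarrow> friendly (v n) \<or> unfriendly (v n) \<or> contingent (v n)"
    and alpha: "\<alpha>F \<ge> 0" "\<alpha>U \<ge> 0" "\<alpha>C \<ge> 0" "\<alpha>F + \<alpha>U + \<alpha>C = 1"
    and nF: "card {n. n < N \<and> friendly (v n)} = nat \<lfloor>\<alpha>F * real N\<rfloor>"
    and nU: "card {n. n < N \<and> unfriendly (v n)} = nat \<lfloor>\<alpha>U * real N\<rfloor>"
    and standing: "\<alpha>F < \<mu>" "\<alpha>U < 1 - \<mu>"
    and valid: "valid_profile N \<Sigma>"
    and reg: "regular N v \<Sigma>"
  shows "eps_strong_BNE N \<mu> Pw Ps v (2 * real B * (real B + 1) * (1 - fidelity N \<mu> Pw Ps \<Sigma>)) \<Sigma>"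
  unfolding eps_strong_BNE_def
proof
  have sig': "\<forall>s w. 0 \<le> Ps s w" "\<forall>w. Ps Sl w + Ps Sh w = 1" using sig by auto
  assume "\<exists>D \<Sigma>'. D \<subseteq> {..<N} \<and> valid_profile N \<Sigma>' \<and> (\<forall>n<N. n \<notin> D \<longrightarrow> \<Sigma>' n = \<Sigma> n)
          \<and> (\<forall>n\<in>D. utility N \<mu> Pw Ps v n \<Sigma>' \<ge> utility N \<mu> Pw Ps v n \<Sigma>)
          \<and> (\<exists>n\<in>D. utility N \<mu> Pw Ps v n \<Sigma>' > utility N \<mu> Pw Ps v n \<Sigma> + 2 * real B * (real B + 1) * (1 - fidelity N \<mu> Pw Ps \<Sigma>))"
  then obtain D \<Sigma>' m where DN: "D \<subseteq> {..<N}" and valid': "valid_profile N \<Sigma>'"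
    and same: "\<forall>n<N. n \<notin> D \<longrightarrow> \<Sigma>' n = \<Sigma> n"
    and weak: "\<forall>n\<in>D. utility N \<mu> Pw Ps v n \<Sigma>' \<ge> utility N \<mu> Pw Ps v n \<Sigma>"
    and mD: "m \<in> D"
    and strong: "utility N \<mu> Pw Ps v m \<Sigma>' > utility N \<mu> Pw Ps v m \<Sigma> + 2 * real B * (real B + 1) * (1 - fidelity N \<mu> Pw Ps \<Sigma>)"
    by blast
  define aL where "aL = lam N \<mu> Ps \<Sigma> L Acc"
  define aH where "aH = lam N \<mu> Ps \<Sigma> H Acc"
  define aL' where "aL' = lam N \<mu> Ps \<Sigma>' L Acc"
  define aH' where "aH' = lam N \<mu> Ps \<Sigma>' H Acc"
  define x where "x = Pw L * (aL' - aL)"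
  define y where "y = Pw H * (aH' - aH)"
  define \<delta> where "\<delta> = 1 - fidelity N \<mu> Pw Ps \<Sigma>"
  define dL where "dL = (\<lambda>n. real (v n L Acc) - real (v n L Rej))"
  define dH where "dH = (\<lambda>n. real (v n H Acc) - real (v n H Rej))"
  define Bn where "Bn = real B"
  have ab: "0 \<le> aL" "aL \<le> 1" "0 \<le> aH" "aH \<le> 1" "0 \<le> aL'" "aL' \<le> 1" "0 \<le> aH'" "aH' \<le> 1"
    unfolding aL_def aH_def aL'_def aH'_def using lam_facts[OF valid sig'] lam_facts[OF valid' sig'] by auto
  have \<delta>eq: "\<delta> = Pw L * aL + Pw H * (1 - aH)"
    unfolding \<delta>_def fidelity_def aL_def aH_def lam_facts(3)[OF valid sig'] using prior(3)
    by (simp add: algebra_simps)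
  have d0: "0 \<le> \<delta>" unfolding \<delta>eq using ab prior by auto
  have xl: "-\<delta> \<le> x"
  proof -
    have "0 \<le> Pw L * aL'" "0 \<le> Pw H * (1 - aH)" using ab prior by auto
    then show ?thesis unfolding \<delta>eq x_def by (simp add: algebra_simps)
  qed
  have yu: "y \<le> \<delta>"
  proof -
    have "Pw H * aH' \<le> Pw H" using ab prior by (simp add: mult_left_le)
    moreover have "0 \<le> Pw L * aL" using ab prior by auto
    ultimately show ?thesis unfolding \<delta>eq y_def by (simp add: algebra_simps)
  qed
  have gain: "utility N \<mu> Pw Ps v n \<Sigma>' - utility N \<mu> Pw Ps v n \<Sigma> = x * dL n + y * dH n" for n
    unfolding utility_eq[OF valid sig'] utility_eq[OF valid' sig'] x_def y_def dL_def dH_def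
      aL_def aH_def aL'_def aH'_def
    by (simp add: algebra_simps)
  have G0: "0 \<le> x * dL n + y * dH n" if "n \<in> D" for n
    using weak that gain[of n] by auto
  have Gm: "x * dL m + y * dH m > 2 * Bn * (Bn + 1) * \<delta>"
    using strong gain[of m] unfolding \<delta>_def Bn_def by linarith
  have B1: "1 \<le> Bn" using B unfolding Bn_def by simp
  have dbd: "\<bar>dL n\<bar> \<le> Bn" "\<bar>dH n\<bar> \<le> Bn" if "n \<in> D" for n
  proof -
    have "n < N" using that DN by auto
    then have "v n L Acc \<le> B" "v n L Rej \<le> B" "v n H Acc \<le> B" "v n H Rej \<le> B"
      using vbound by auto
    then show "\<bar>dL n\<bar> \<le> Bn" "\<bar>dH n\<bar> \<le> Bn" unfolding dL_def dH_def Bn_def by linarith+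
  qed
  have epos: "0 \<le> 2 * Bn * (Bn + 1) * \<delta>" using B1 d0 by simp
  have fr: "0 < dL n \<and> dL n < dH n" if "friendly (v n)" for n
    using that unfolding friendly_def dL_def dH_def by linarith
  have ufr: "dL n < dH n \<and> dH n < 0" if "unfriendly (v n)" for n
    using that unfolding unfriendly_def dL_def dH_def by linarith
  have co: "dL n \<le> -1 \<and> 1 \<le> dH n" if "contingent (v n)" for n
    using that unfolding contingent_def dL_def dH_def by linarith
  have Qlam: "\<And>S w. lam N \<mu> Ps S w Acc = Q {..<N} (pvote Ps S w) (wins N \<mu> Acc)" by (rule lam_Q)
  have pv: "\<And>w n. n < N \<Longrightarrow> 0 \<le> pvote Ps \<Sigma> w n \<and> pvote Ps \<Sigma> w n \<le> 1"
    by (rule pvote_bounds[OF valid _ sig'])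
  have pv': "\<And>w n. n < N \<Longrightarrow> 0 \<le> pvote Ps \<Sigma>' w n \<and> pvote Ps \<Sigma>' w n \<le> 1"
    by (rule pvote_bounds[OF valid' _ sig'])
  show False
  proof (cases "\<exists>c\<in>D. contingent (v c)")
    case True
    then obtain c where c: "c \<in> D" "contingent (v c)" by blast
    have "x * dL m + y * dH m \<le> 2 * Bn * (Bn + 1) * \<delta>"
      by (rule cont_bound[OF d0 xl yu, of "dL c" Bn "dH c" "dL m" "dH m"])
         (use co[OF c(2)] dbd[OF c(1)] G0[OF c(1)] dbd[OF mD] in \<open>auto simp: abs_le_iff\<close>)
    then show False using Gm by linarith
  next
    case False
    then have FU: "friendly (v n) \<or> unfriendly (v n)" if "n \<in> D" for n
      using types that DN by blast
    show False
    proof (cases "\<exists>f\<in>D. friendly (v f)")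
      case True
      then obtain f where f: "f \<in> D" "friendly (v f)" by blast
      show False
      proof (cases "\<exists>u\<in>D. unfriendly (v u)")
        case True
        then obtain u where u: "u \<in> D" "unfriendly (v u)" by blast
        have "x * dL m + y * dH m \<le> 2 * Bn * (Bn + 1) * \<delta>"
          using mixed_bound[OF d0 xl yu, of "dL f" "dH f" "dL u" "dH u" "dL m" Bn "dH m"]
            fr[OF f(2)] ufr[OF u(2)] G0[OF f(1)] G0[OF u(1)] dbd[OF mD] B1
          by linarith
        then show False using Gm by linarith
      next
        case False
        then have allF: "friendly (v n)" if "n \<in> D" for n using FU that by blast
        have le: "lam N \<mu> Ps \<Sigma>' w Acc \<le> lam N \<mu> Ps \<Sigma> w Acc" for w
          unfolding Qlam
        proof (rule Q_mono)
          show "finite {..<N}" by simp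
          show "\<And>S j. wins N \<mu> Acc S \<Longrightarrow> wins N \<mu> Acc (insert j S)" by (rule wins_up)
          show "\<forall>n\<in>{..<N}. 0 \<le> pvote Ps \<Sigma>' w n \<and> pvote Ps \<Sigma>' w n \<le> pvote Ps \<Sigma> w n \<and> pvote Ps \<Sigma> w n \<le> 1"
          proof
            fix n assume n: "n \<in> {..<N}"
            show "0 \<le> pvote Ps \<Sigma>' w n \<and> pvote Ps \<Sigma>' w n \<le> pvote Ps \<Sigma> w n \<and> pvote Ps \<Sigma> w n \<le> 1"
            proof (cases "n \<in> D")
              case True
              then have "\<Sigma> n = (1, 1)" using allF reg n unfolding regular_def by auto
              then have "pvote Ps \<Sigma> w n = 1" using sig(2)[of w] by (simp add: pvote_def)
              then show ?thesis using pv'[of n w] n by simp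
            next
              case False
              then show ?thesis using same pv[of n w] n by (simp add: pvote_def)
            qed
          qed
        qed
        have "x \<le> 0" "y \<le> 0" using le[of L] le[of H] prior
          unfolding x_def y_def aL_def aL'_def aH_def aH'_def by (simp_all add: mult_nonneg_nonpos)
        moreover have "0 < dL m" "0 < dH m" using fr[OF allF[OF mD]] by linarith+
        ultimately have "x * dL m + y * dH m \<le> 0"
          by (simp add: add_nonpos_nonpos mult_nonpos_nonneg)
        then show False using Gm epos by linarith
      qed
    next
      case False
      then have allU: "unfriendly (v n)" if "n \<in> D" for n using FU that by blast
      have le: "lam N \<mu> Ps \<Sigma> w Acc \<le> lam N \<mu> Ps \<Sigma>' w Acc" for w
        unfolding Qlam
      proof (rule Q_mono)
        show "finite {..<N}" by simp
        show "\<And>S j. wins N \<mu> Acc S \<Longrightarrow> wins N \<mu> Acc (insert j S)" by (rule wins_up)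
        show "\<forall>n\<in>{..<N}. 0 \<le> pvote Ps \<Sigma> w n \<and> pvote Ps \<Sigma> w n \<le> pvote Ps \<Sigma>' w n \<and> pvote Ps \<Sigma>' w n \<le> 1"
        proof
          fix n assume n: "n \<in> {..<N}"
          show "0 \<le> pvote Ps \<Sigma> w n \<and> pvote Ps \<Sigma> w n \<le> pvote Ps \<Sigma>' w n \<and> pvote Ps \<Sigma>' w n \<le> 1"
          proof (cases "n \<in> D")
            case True
            then have "\<Sigma> n = (0, 0)" using allU reg n unfolding regular_def by auto
            then have "pvote Ps \<Sigma> w n = 0" by (simp add: pvote_def)
            then show ?thesis using pv'[of n w] n by simp
          next
            case False
            then show ?thesis using same pv[of n w] n by (simp add: pvote_def)
          qed
        qed
      qed
      have "0 \<le> x" "0 \<le> y" using le[of L] le[of H] prior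
        unfolding x_def y_def aL_def aL'_def aH_def aH'_def by simp_all
      moreover have "dL m < 0" "dH m < 0" using ufr[OF allU[OF mD]] by linarith+
      ultimately have "x * dL m + y * dH m \<le> 0"
        by (simp add: add_nonpos_nonpos mult_nonneg_nonpos)
      then show False using Gm epos by linarith
    qed
  qed
qed

end
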